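(* Let $p,m,n\in\mathbb{R}$, $a,b,c\in\mathbb{O}$, and $$\mathcal{A}=\begin{pmatrix}p&a&\overline{b}\\ \overline{a}&m&c\\ b&\overline{c}&n\end{pmatrix}.$$ Suppose $v=(x,y,z)^T\in\mathbb{O}^3$ and $\lambda\in\mathbb{O}$ satisfy $\mathcal{A}v=v\lambda$. Then $$\begin{aligned} z\big(\lambda^3-(\mathrm{tr}\,\mathcal{A})\lambda^2+\sigma(\mathcal{A})\lambda-\det\mathcal{A}\big) &= b\big(a(cz)\big)+\overline{c}\big(\overline{a}(\overline{b}z)\big)-\big(b(ac)+(\overline{c}\,\overline{a})\overline{b}\big)z\\ &\quad + b\,[a,y,\lambda]+[b,ay,\lambda]+[b,x,\lambda](\lambda-m)\\ &\quad + \overline{c}\,[\overline{a},x,\lambda]+[\overline{c},\overline{a}x,\lambda]+[\overline{c},y,\lambda](\lambda-p), \end{aligned}$$ where $\mathrm{tr}\,\mathcal{A}=p+m+n$, $\sigma(\mathcal{A})=pm+pn+mn-|a|^2-|b|^2-|c|^2$, and $\det\mathcal{A}=pmn+b(ac)+\overline{b(ac)}-n|a|^2-m|b|^2-p|c|^2$.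
   Context: $\mathbb{O}$ denotes the octonions, $\overline{a}$ octonionic conjugation, $|a|$ the norm, $[a,b,c]=(ab)c-a(bc)$ the associator. Powers $\lambda^2,\lambda^3$ of a single octonion are unambiguous. Matrix–vector products are computed entrywise with octonionic multiplication; $v\lambda$ means each component of $v$ multiplied on the right by $\lambda$. *)

theory Defs
  imports Complex_Main
begin

text \<open>Octonions via the Cayley--Dickson construction:
  quaternions are pairs of complex numbers, octonions are pairs of quaternions,
  with product (a,b)(c,d) = (a c - conj(d) b, d a + b conj(c))
  and conjugation conj(a,b) = (conj a, -b).\<close>

datatype quat = Quat complex complex

fun qconj :: "quat \<Rightarrow> quat" where
  "qconj (Quat a b) = Quat (cnj a) (- b)"

instantiation quat :: "{zero, one, plus, minus, uminus, times, power}"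
begin
definition "0 = Quat 0 0"
definition "1 = Quat 1 0"
fun plus_quat where "Quat a b + Quat c d = Quat (a + c) (b + d)"
fun minus_quat where "Quat a b - Quat c d = Quat (a - c) (b - d)"
fun uminus_quat where "- Quat a b = Quat (- a) (- b)"
fun times_quat where
  "Quat a b * Quat c d = Quat (a * c - cnj d * b) (d * a + b * cnj c)"
instance ..
end

fun qnormsq :: "quat \<Rightarrow> real" where
  "qnormsq (Quat a b) = (cmod a)\<^sup>2 + (cmod b)\<^sup>2"

datatype oct = Oct quat quat

fun oconj :: "oct \<Rightarrow> oct" where
  "oconj (Oct a b) = Oct (qconj a) (- b)"

instantiation oct :: "{zero, one, plus, minus, uminus, times, power}"
begin
definition "0 = Oct 0 0"
definition "1 = Oct 1 0"
fun plus_oct where "Oct a b + Oct c d = Oct (a + c) (b + d)"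
fun minus_oct where "Oct a b - Oct c d = Oct (a - c) (b - d)"
fun uminus_oct where "- Oct a b = Oct (- a) (- b)"
fun times_oct where
  "Oct a b * Oct c d = Oct (a * c - qconj d * b) (d * a + b * qconj c)"
instance ..
end

definition oreal :: "real \<Rightarrow> oct" where
  "oreal r = Oct (Quat (complex_of_real r) 0) 0"

fun onorm :: "oct \<Rightarrow> real" where
  "onorm (Oct a b) = sqrt (qnormsq a + qnormsq b)"

definition assoc :: "oct \<Rightarrow> oct \<Rightarrow> oct \<Rightarrow> oct" where
  "assoc a b c = (a * b) * c - a * (b * c)"

end

theory Submission
  imports Defs
begin
lemma oct_cases8: obtains a1 a2 a3 a4 a5 a6 a7 a8 where "x = Oct (Quat (Complex a1 a2) (Complex a3 a4)) (Quat (Complex a5 a6) (Complex a7 a8))"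
  by (metis complex.exhaust quat.exhaust oct.exhaust)

lemmas cs = zero_oct_def one_oct_def zero_quat_def one_quat_def oreal_def complex_eq_iff

instantiation oct :: real_vector
begin
definition scaleR_oct :: "real \<Rightarrow> oct \<Rightarrow> oct" where "scaleR_oct r x = oreal r * x"
instance
  apply intro_classes
  apply (simp_all only: scaleR_oct_def)
  subgoal for a b c by (cases a rule: oct_cases8; cases b rule: oct_cases8; cases c rule: oct_cases8; simp add: cs algebra_simps)
  subgoal for a b by (cases a rule: oct_cases8; cases b rule: oct_cases8; simp add: cs algebra_simps)
  subgoal for a by (cases a rule: oct_cases8; simp add: cs algebra_simps)
  subgoal for a by (cases a rule: oct_cases8; simp add: cs algebra_simps)
  subgoal for a b by (cases a rule: oct_cases8; cases b rule: oct_cases8; simp add: cs algebra_simps)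
  subgoal for a b c by (cases b rule: oct_cases8; cases c rule: oct_cases8; simp add: cs algebra_simps)
  subgoal for a b c by (cases c rule: oct_cases8; simp add: cs algebra_simps)
  subgoal for a b c by (cases c rule: oct_cases8; simp add: cs algebra_simps)
  subgoal for a by (cases a rule: oct_cases8; simp add: cs algebra_simps)
  done
end

lemma oreal_sc: "oreal r * x = r *\<^sub>R x" by (simp add: scaleR_oct_def)

lemma dl: "x * (y + z) = x * y + x * (z::oct)"
  by (cases x rule: oct_cases8; cases y rule: oct_cases8; cases z rule: oct_cases8; simp add: cs algebra_simps)
lemma dr: "(y + z) * x = y * x + z * (x::oct)"
  by (cases x rule: oct_cases8; cases y rule: oct_cases8; cases z rule: oct_cases8; simp add: cs algebra_simps)
lemma dlm: "x * (y - z) = x * y - x * (z::oct)"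
  by (cases x rule: oct_cases8; cases y rule: oct_cases8; cases z rule: oct_cases8; simp add: cs algebra_simps)
lemma drm: "(y - z) * x = y * x - z * (x::oct)"
  by (cases x rule: oct_cases8; cases y rule: oct_cases8; cases z rule: oct_cases8; simp add: cs algebra_simps)
lemma sl: "(r *\<^sub>R x) * y = r *\<^sub>R (x * (y::oct))"
  unfolding scaleR_oct_def
  by (cases x rule: oct_cases8; cases y rule: oct_cases8; simp add: cs algebra_simps)
lemma sr: "x * (r *\<^sub>R y) = r *\<^sub>R (x * (y::oct))"
  unfolding scaleR_oct_def
  by (cases x rule: oct_cases8; cases y rule: oct_cases8; simp add: cs algebra_simps)
lemma mult1: "x * (1::oct) = x"
  by (cases x rule: oct_cases8; simp add: cs algebra_simps)
lemma conj_mult: "oconj (x * y) = oconj y * oconj x"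
  by (cases x rule: oct_cases8; cases y rule: oct_cases8; simp add: cs algebra_simps)
lemma real_comm: "z * w + z * oconj w = w * z + oconj w * z"
  by (cases z rule: oct_cases8; cases w rule: oct_cases8; simp add: cs algebra_simps)
lemma ro: "z * oreal r = r *\<^sub>R z"
  unfolding scaleR_oct_def
  by (cases z rule: oct_cases8; simp add: cs algebra_simps)
lemma alt2: "(z*l)*l = z*(l*(l::oct))"
  by (cases z rule: oct_cases8; cases l rule: oct_cases8; simp add: cs algebra_simps)
lemma alt3: "((z*l)*l)*l = z*(l*(l*l::oct))"
  by (cases z rule: oct_cases8; cases l rule: oct_cases8; simp add: cs algebra_simps)
lemma onorm_sq: "(onorm u)^2 = (case u of Oct (Quat (Complex a1 a2) (Complex a3 a4)) (Quat (Complex a5 a6) (Complex a7 a8)) \<Rightarrow>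
   a1^2+a2^2+a3^2+a4^2+a5^2+a6^2+a7^2+a8^2)"
  by (cases u rule: oct_cases8; simp add: cmod_def)
lemma norm1: "u * (oconj u * z) = (onorm u)^2 *\<^sub>R z"
  unfolding onorm_sq scaleR_oct_def
  by (cases u rule: oct_cases8; cases z rule: oct_cases8; simp add: cs algebra_simps power2_eq_square)
lemma norm2: "oconj u * (u * z) = (onorm u)^2 *\<^sub>R z"
  unfolding onorm_sq scaleR_oct_def
  by (cases u rule: oct_cases8; cases z rule: oct_cases8; simp add: cs algebra_simps power2_eq_square)

theorem mainTheorem4:
  fixes p m n :: real and a b c x y z l :: oct
  assumes eq1: "oreal p * x + a * y + oconj b * z = x * l"
      and eq2: "oconj a * x + oreal m * y + c * z = y * l"
      and eq3: "b * x + oconj c * y + oreal n * z = z * l"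
  shows "(let trA = p + m + n;
              sigmaA = p*m + p*n + m*n - (onorm a)\<^sup>2 - (onorm b)\<^sup>2 - (onorm c)\<^sup>2;
              detA = oreal (p*m*n) + b * (a * c) + oconj (b * (a * c))
                     - oreal (n * (onorm a)\<^sup>2) - oreal (m * (onorm b)\<^sup>2)
                     - oreal (p * (onorm c)\<^sup>2)
          in z * (l ^ 3 - oreal trA * l ^ 2 + oreal sigmaA * l - detA)
             = b * (a * (c * z)) + oconj c * (oconj a * (oconj b * z))
               - (b * (a * c) + (oconj c * oconj a) * oconj b) * z
               + b * assoc a y l + assoc b (a * y) l + assoc b x l * (l - oreal m)
               + oconj c * assoc (oconj a) x l + assoc (oconj c) (oconj a * x) l
               + assoc (oconj c) y l * (l - oreal p))"
proof -
  define Na where "Na = (onorm a)\<^sup>2"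
  define Nb where "Nb = (onorm b)\<^sup>2"
  define Nc where "Nc = (onorm c)\<^sup>2"
  have asc: "(u*v)*l = u*(v*l) + assoc u v l" for u v by (simp add: assoc_def)
  have h1: "x*l = p *\<^sub>R x + a*y + oconj b*z" using eq1 by (simp add: oreal_sc)
  have h2: "y*l = oconj a*x + m *\<^sub>R y + c*z" using eq2 by (simp add: oreal_sc)
  have h3: "z*l = b*x + oconj c*y + n *\<^sub>R z" using eq3 by (simp add: oreal_sc)
  have bxl: "(b*x)*l = p *\<^sub>R (b*x) + b*(a*y) + Nb *\<^sub>R z + assoc b x l"
    by (simp only: asc h1 dl sr norm1 Nb_def)
  have cyl: "(oconj c*y)*l = oconj c*(oconj a*x) + m *\<^sub>R (oconj c*y) + Nc *\<^sub>R z + assoc (oconj c) y l"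
    by (simp only: asc h2 dl sr norm2 Nc_def)
  have Z2: "(z*l)*l = p *\<^sub>R (b*x) + b*(a*y) + Nb *\<^sub>R z + assoc b x l
      + (oconj c*(oconj a*x) + m *\<^sub>R (oconj c*y) + Nc *\<^sub>R z + assoc (oconj c) y l)
      + n *\<^sub>R (b*x + oconj c*y + n *\<^sub>R z)"
    by (simp only: h3 dr sl bxl cyl)
  have ayl: "(a*y)*l = Na *\<^sub>R x + m *\<^sub>R (a*y) + a*(c*z) + assoc a y l"
    by (simp only: asc h2 dl sr norm1 Na_def)
  have bayl: "(b*(a*y))*l = Na *\<^sub>R (b*x) + m *\<^sub>R (b*(a*y)) + b*(a*(c*z)) + b*assoc a y l + assoc b (a*y) l"
    by (simp only: asc[of b "a*y"] ayl dl sr)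
  have axl: "(oconj a*x)*l = p *\<^sub>R (oconj a*x) + Na *\<^sub>R y + oconj a*(oconj b*z) + assoc (oconj a) x l"
    by (simp only: asc h1 dl sr norm2 Na_def)
  have caxl: "(oconj c*(oconj a*x))*l = p *\<^sub>R (oconj c*(oconj a*x)) + Na *\<^sub>R (oconj c*y) + oconj c*(oconj a*(oconj b*z)) + oconj c*assoc (oconj a) x l + assoc (oconj c) (oconj a*x) l"
    by (simp only: asc[of "oconj c" "oconj a*x"] axl dl sr)
  have Z3: "((z*l)*l)*l = p *\<^sub>R (p *\<^sub>R (b*x) + b*(a*y) + Nb *\<^sub>R z + assoc b x l)
      + (Na *\<^sub>R (b*x) + m *\<^sub>R (b*(a*y)) + b*(a*(c*z)) + b*assoc a y l + assoc b (a*y) l)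
      + Nb *\<^sub>R (b*x + oconj c*y + n *\<^sub>R z) + assoc b x l * l
      + (p *\<^sub>R (oconj c*(oconj a*x)) + Na *\<^sub>R (oconj c*y) + oconj c*(oconj a*(oconj b*z)) + oconj c*assoc (oconj a) x l + assoc (oconj c) (oconj a*x) l)
      + m *\<^sub>R (oconj c*(oconj a*x) + m *\<^sub>R (oconj c*y) + Nc *\<^sub>R z + assoc (oconj c) y l)
      + Nc *\<^sub>R (b*x + oconj c*y + n *\<^sub>R z) + assoc (oconj c) y l * l
      + n *\<^sub>R (p *\<^sub>R (b*x) + b*(a*y) + Nb *\<^sub>R z + assoc b x l
      + (oconj c*(oconj a*x) + m *\<^sub>R (oconj c*y) + Nc *\<^sub>R z + assoc (oconj c) y l)
      + n *\<^sub>R (b*x + oconj c*y + n *\<^sub>R z))"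
    apply (simp only: Z2 dr sl bxl cyl bayl caxl)
    apply (simp only: h3 add.assoc)
    done
  define W where "W = b*(a*c)"
  have cW: "oconj W = (oconj c * oconj a) * oconj b" by (simp add: W_def conj_mult)
  have rc: "z*W = W*z + oconj W*z - z*oconj W" using real_comm[of z W] by (simp add: algebra_simps)
  have l3: "l^3 = l*(l*l)" by (simp add: numeral_3_eq_3 mult1)
  have l2: "l^2 = l*l" by (simp add: numeral_2_eq_2 mult1)
  have L: "z * (l ^ 3 - oreal (p+m+n) * l ^ 2 + oreal (p*m + p*n + m*n - Na - Nb - Nc) * l
      - (oreal (p*m*n) + W + oconj W - oreal (n * Na) - oreal (m * Nb) - oreal (p * Nc)))
     = ((z*l)*l)*l - (p+m+n) *\<^sub>R ((z*l)*l) + (p*m + p*n + m*n - Na - Nb - Nc) *\<^sub>R (z*l)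
       - ((p*m*n) *\<^sub>R z + (W*z + oconj W*z - z*oconj W) + z * oconj W - (n*Na) *\<^sub>R z - (m*Nb) *\<^sub>R z - (p*Nc) *\<^sub>R z)"
    apply (simp only: l3 l2 oreal_sc dl dlm sr sl rc mult1 ro)
    apply (simp only: alt3[symmetric])
    apply (simp only: alt2[symmetric])
    done
  show ?thesis
    unfolding Let_def Na_def[symmetric] Nb_def[symmetric] Nc_def[symmetric] W_def[symmetric] cW[symmetric]
    unfolding L
    unfolding Z3
    unfolding Z2
    unfolding h3
    by (simp add: dr drm dlm ro oreal_sc sl algebra_simps)
qed
end
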